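(* Let $f \in \mathbb{C}[x_1,\dots,x_n]_d$. If $f$ has a local border decomposition with $r$ summands and base $[\ell]$, then $f$ has a standard local border decomposition with the same base $[\ell]$ and the same number $r$ of summands.
   Context: Let $\mathbb{C}(\epsilon)[\boldsymbol{x}]_1$ be the set of linear forms in $x_1,\dots,x_n$ with coefficients rational functions of $\epsilon$. A nonzero $\ell(\epsilon)\in\mathbb{C}(\epsilon)[\boldsymbol{x}]_1$ can be expanded as a Laurent series $\ell(\epsilon)=\sum_{i\ge q}\epsilon^i \ell_i$ with $\ell_i\in\mathbb{C}[\boldsymbol{x}]_1$, $\ell_q\neq 0$; its projective limit is $\lim_{\epsilon\to0}[\ell(\epsilon)] := [\ell_q]$, a point of the projective space of lines in $\mathbb{C}[\boldsymbol{x}]_1$. A border Waring rank decomposition of $f$ is an expression $f=\lim_{\epsilon\to0}\sum_{k=1}^r \ell_k^d$ with $\ell_k\in\mathbb{C}(\epsilon)[\boldsymbol{x}]_1$ (limit taken coefficientwise). It is a local border decomposition with base $[\ell]$ (for a nonzero $\ell\in\mathbb{C}[\boldsymbol{x}]_1$) if $\lim_{\epsilon\to0}[\ell_k(\epsilon)]=[\ell]$ for all $k=1,\dots,r$. A local border decomposition with base $[\ell]$ is standard if $\ell_1=\epsilon^q\gamma\ell$ for some $q\in\mathbb{Z}$ and $\gamma\in\mathbb{C}$. *)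

theory Defs
  imports "HOL-Computational_Algebra.Formal_Laurent_Series" "HOL-Computational_Algebra.Polynomial_FPS"
begin

text \<open>The field C(eps) of rational functions in eps, viewed inside the field of formal Laurent
  series C((eps)) via Laurent expansion at eps = 0: a Laurent series is rational iff
  multiplying it by some nonzero polynomial gives a polynomial.\<close>
definition rational_fls :: "complex fls \<Rightarrow> bool" where
  "rational_fls a \<longleftrightarrow> (\<exists>p q :: complex poly. q \<noteq> 0 \<and>
      a * fps_to_fls (fps_of_poly q) = fps_to_fls (fps_of_poly p))"

definition rat_linform :: "('n \<Rightarrow> complex fls) \<Rightarrow> bool" where
  "rat_linform L \<longleftrightarrow> (\<forall>i. rational_fls (L i))"

definition lf_eval :: "('n::finite \<Rightarrow> complex fls) \<Rightarrow> ('n \<Rightarrow> complex) \<Rightarrow> complex fls" where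
  "lf_eval L v = (\<Sum>i\<in>UNIV. L i * fls_const (v i))"

text \<open>Projective limit: lim [L(eps)] = [l].  Writing L = sum_{i>=q} eps^i L_i with L_q ~= 0,
  this says L_q = c l for some nonzero c.\<close>
definition proj_lim_is :: "('n \<Rightarrow> complex fls) \<Rightarrow> ('n \<Rightarrow> complex) \<Rightarrow> bool" where
  "proj_lim_is L l \<longleftrightarrow> l \<noteq> (\<lambda>_. 0) \<and>
     (\<exists>q::int. \<exists>c::complex. c \<noteq> 0 \<and> (\<forall>i. \<forall>m<q. fls_nth (L i) m = 0) \<and>
        (\<forall>i. fls_nth (L i) q = c * l i))"

text \<open>f = lim_{eps->0} sum_{k=1}^r L_k(eps)^d, with f a form of degree d represented by its
  polynomial function on C^n.  The limit is taken coefficientwise, which (over the infinite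
  field C) is the same as: at every point v, the Laurent series sum_k L_k(eps)(v)^d has no
  negative-degree terms and constant term f v.\<close>
definition border_limit ::
  "(('n::finite \<Rightarrow> complex) \<Rightarrow> complex) \<Rightarrow> nat \<Rightarrow> nat \<Rightarrow> (nat \<Rightarrow> 'n \<Rightarrow> complex fls) \<Rightarrow> bool" where
  "border_limit f d r Ls \<longleftrightarrow> (\<forall>v.
     (\<forall>m<0. fls_nth (\<Sum>k\<in>{1..r}. (lf_eval (Ls k) v) ^ d) m = 0) \<and>
     fls_nth (\<Sum>k\<in>{1..r}. (lf_eval (Ls k) v) ^ d) 0 = f v)"

definition local_border_decomp ::
  "(('n::finite \<Rightarrow> complex) \<Rightarrow> complex) \<Rightarrow> nat \<Rightarrow> nat \<Rightarrow> (nat \<Rightarrow> 'n \<Rightarrow> complex fls)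
     \<Rightarrow> ('n \<Rightarrow> complex) \<Rightarrow> bool" where
  "local_border_decomp f d r Ls l \<longleftrightarrow>
     (\<forall>k\<in>{1..r}. rat_linform (Ls k)) \<and> border_limit f d r Ls \<and>
     (\<forall>k\<in>{1..r}. proj_lim_is (Ls k) l)"

definition standard_first :: "(nat \<Rightarrow> 'n \<Rightarrow> complex fls) \<Rightarrow> ('n \<Rightarrow> complex) \<Rightarrow> bool" where
  "standard_first Ls l \<longleftrightarrow> (\<exists>q::int. \<exists>\<gamma>::complex.
     Ls 1 = (\<lambda>i. fls_X_intpow q * fls_const (\<gamma> * l i)))"

end

theory Submission imports Defs begin
abbreviation PP :: "complex poly \<Rightarrow> complex fls" where "PP p \<equiv> fps_to_fls (fps_of_poly p)"

lemma PP_mult: "PP (p*q) = PP p * PP q" by (simp add: fps_of_poly_mult fls_times_fps_to_fls)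
lemma PP_add: "PP (p+q) = PP p + PP q" by (simp add: fps_of_poly_add)
lemma PP_nz: "q \<noteq> 0 \<Longrightarrow> PP q \<noteq> 0" by simp

lemma rat_PP: "rational_fls (PP p)"
  unfolding rational_fls_def by (rule exI[of _ p], rule exI[of _ 1]) simp

lemma rat_mult: assumes "rational_fls a" "rational_fls b" shows "rational_fls (a*b)"
proof -
  obtain p1 q1 where 1: "q1\<noteq>0" "a * PP q1 = PP p1" using assms(1) unfolding rational_fls_def by blast
  obtain p2 q2 where 2: "q2\<noteq>0" "b * PP q2 = PP p2" using assms(2) unfolding rational_fls_def by blast
  have "a*b * PP (q1*q2) = PP (p1*p2)" using 1 2 by (simp add: PP_mult algebra_simps)
  then show ?thesis unfolding rational_fls_def using 1 2 by (metis mult_eq_0_iff)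
qed

lemma rat_add: assumes "rational_fls a" "rational_fls b" shows "rational_fls (a+b)"
proof -
  obtain p1 q1 where 1: "q1\<noteq>0" "a * PP q1 = PP p1" using assms(1) unfolding rational_fls_def by blast
  obtain p2 q2 where 2: "q2\<noteq>0" "b * PP q2 = PP p2" using assms(2) unfolding rational_fls_def by blast
  have "(a+b) * PP (q1*q2) = PP (p1*q2 + p2*q1)" 
    by (simp add: PP_mult PP_add algebra_simps flip: 1(2) 2(2))
  then show ?thesis unfolding rational_fls_def using 1 2 by (metis mult_eq_0_iff)
qed

lemma rat_const: "rational_fls (fls_const c)"
  using rat_PP[of "[:c:]"] by (simp add: fps_of_poly_const)

lemma rat_neg: assumes "rational_fls a" shows "rational_fls (-a)"
proof -
  have "fls_const (-1) * a = -a" by simp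
  then show ?thesis using rat_mult[OF rat_const[of "-1"] assms] by metis
qed

lemma rat_diff: assumes "rational_fls a" "rational_fls b" shows "rational_fls (a-b)"
  using rat_add[OF assms(1) rat_neg[OF assms(2)]] by simp

lemma rat_div: assumes "rational_fls a" "rational_fls b" shows "rational_fls (a/b)"
proof (cases "b = 0")
  case True then show ?thesis using rat_const[of 0] by simp
next
  case False
  obtain p1 q1 where 1: "q1\<noteq>0" "a * PP q1 = PP p1" using assms(1) unfolding rational_fls_def by blast
  obtain p2 q2 where 2: "q2\<noteq>0" "b * PP q2 = PP p2" using assms(2) unfolding rational_fls_def by blast
  have "p2 \<noteq> 0" using 2 False by (metis PP_nz fps_of_poly_0 fps_zero_to_fls mult_eq_0_iff)
  have "a/b * PP (q1*p2) = PP (p1*q2)"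
    using False by (simp add: PP_mult field_simps flip: 1(2) 2(2))
  then show ?thesis unfolding rational_fls_def using 1 2 \<open>p2\<noteq>0\<close> by (metis mult_eq_0_iff)
qed

lemma rat_X: "rational_fls (fls_X :: complex fls)"
  using rat_PP[of "[:0,1:]"] by simp

lemma rat_Xpow_nn: "q \<ge> 0 \<Longrightarrow> rational_fls (fls_X_intpow q :: complex fls)"
proof -
  assume "q \<ge> 0"
  then have "fls_X_intpow q = (fls_X :: complex fls) ^ nat q" by (simp add: fls_X_power_conv_shift_1)
  moreover have "rational_fls ((fls_X :: complex fls) ^ n)" for n
    by (induction n) (auto intro: rat_mult rat_X simp: rat_const[of 1, simplified])
  ultimately show ?thesis by simp
qed

lemma rat_Xpow: "rational_fls (fls_X_intpow q :: complex fls)"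
proof (cases "q \<ge> 0")
  case True then show ?thesis by (rule rat_Xpow_nn)
next
  case False
  have "fls_X_intpow q * fls_X_intpow (-q) = (1::complex fls)"
    by (simp only: fls_X_intpow_times_fls_X_intpow) simp
  then have "fls_X_intpow q = 1 / (fls_X_intpow (-q) :: complex fls)"
    by (metis eq_divide_eq fls_X_intpow_nonzero)
  then show ?thesis using rat_div[OF rat_const[of 1] rat_Xpow_nn[of "-q"]] False by simp
qed

definition ordge :: "int \<Rightarrow> complex fls \<Rightarrow> bool" where
  "ordge N X \<longleftrightarrow> (\<forall>m<N. fls_nth X m = 0)"

lemma ordge_sub: "ordge N X \<Longrightarrow> X \<noteq> 0 \<Longrightarrow> N \<le> fls_subdegree X"
  unfolding ordge_def by (rule fls_subdegree_geI) auto

lemma ordge_I: "X = 0 \<or> N \<le> fls_subdegree X \<Longrightarrow> ordge N X"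
  unfolding ordge_def by auto

lemma ordge_mult: assumes "ordge a X" "ordge b Y" shows "ordge (a+b) (X*Y)"
proof (cases "X = 0 \<or> Y = 0")
  case True then show ?thesis unfolding ordge_def by auto
next
  case False
  then show ?thesis using ordge_sub[OF assms(1)] ordge_sub[OF assms(2)]
    by (intro ordge_I) auto
qed

lemma ordge_mono: "N' \<le> N \<Longrightarrow> ordge N X \<Longrightarrow> ordge N' X"
  unfolding ordge_def by auto

lemma ordge_pow0: "ordge 0 X \<Longrightarrow> ordge 0 (X^m)"
proof (induction m)
  case 0 then show ?case unfolding ordge_def by simp
next
  case (Suc m) then show ?case using ordge_mult[of 0 X 0 "X^m"] by simp
qed

lemma ordge_div: assumes "Y * B = A" "B \<noteq> 0" "fls_subdegree B = q" "ordge N A"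
  shows "ordge (N - q) Y"
proof (cases "Y = 0")
  case True then show ?thesis unfolding ordge_def by auto
next
  case False
  then have "A \<noteq> 0" using assms by auto
  then have "N \<le> fls_subdegree A" using ordge_sub assms by blast
  then show ?thesis using assms False by (intro ordge_I) auto
qed

lemma ordge_add: "ordge N X \<Longrightarrow> ordge N Y \<Longrightarrow> ordge N (X+Y)"
  unfolding ordge_def by auto
lemma ordge_diff: "ordge N X \<Longrightarrow> ordge N Y \<Longrightarrow> ordge N (X-Y)"
  unfolding ordge_def by auto
lemma ordge_neg: "ordge N X \<Longrightarrow> ordge N (-X)"
  unfolding ordge_def by auto
lemma ordge_const_mult: "ordge N X \<Longrightarrow> ordge N (X * fls_const a)"
  unfolding ordge_def by auto
lemma ordge_sum: "(\<And>i. i \<in> A \<Longrightarrow> ordge N (g i)) \<Longrightarrow> ordge N (\<Sum>i\<in>A. g i)"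
  unfolding ordge_def by (auto simp: fls_nth_sum)

lemma binom_sum:
  fixes x y :: "nat \<Rightarrow> complex fls"
  shows "(\<Sum>k\<in>K. (x k + s * y k)^d) =
     (\<Sum>m\<le>d. s^m * (\<Sum>k\<in>K. of_nat (d choose m) * y k ^ m * x k ^ (d - m)))"
proof -
  have "(\<Sum>k\<in>K. (x k + s * y k)^d) = (\<Sum>k\<in>K. (s * y k + x k)^d)" by (simp add: add.commute)
  also have "\<dots> = (\<Sum>k\<in>K. \<Sum>m\<le>d. of_nat (d choose m) * (s * y k)^m * x k ^ (d - m))"
    by (simp add: binomial_ring)
  also have "\<dots> = (\<Sum>m\<le>d. \<Sum>k\<in>K. s^m * (of_nat (d choose m) * y k ^ m * x k ^ (d - m)))"
    by (subst sum.swap) (simp add: power_mult_distrib algebra_simps)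
  also have "\<dots> = (\<Sum>m\<le>d. s^m * (\<Sum>k\<in>K. of_nat (d choose m) * y k ^ m * x k ^ (d - m)))"
    by (simp add: sum_distrib_left)
  finally show ?thesis .
qed

lemma poly_vanish:
  fixes a :: "nat \<Rightarrow> complex"
  assumes "\<And>\<sigma>. (\<Sum>m\<le>d. \<sigma>^m * a m) = 0" "m \<le> d"
  shows "a m = 0"
proof -
  define P where "P = (\<Sum>m\<le>d. monom (a m) m)"
  have "poly P \<sigma> = 0" for \<sigma>
    using assms(1)[of \<sigma>] unfolding P_def by (simp add: poly_sum poly_monom mult.commute)
  then have "P = 0" using poly_all_0_iff_0 by blast
  then have "coeff P m = 0" by simp
  then show ?thesis unfolding P_def using coeff_sum_monom[OF assms(2), of a] by simp
qed


theorem lemma6: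
  fixes f :: "('n::finite \<Rightarrow> complex) \<Rightarrow> complex" and d r :: nat
    and Ls :: "nat \<Rightarrow> 'n \<Rightarrow> complex fls" and l :: "'n \<Rightarrow> complex"
  assumes "r \<ge> 1"
    and "local_border_decomp f d r Ls l"
  shows "\<exists>Ls' :: nat \<Rightarrow> 'n \<Rightarrow> complex fls.
           local_border_decomp f d r Ls' l \<and> standard_first Ls' l"
proof -
  have LF: "\<And>k. k \<in> {1..r} \<Longrightarrow> rat_linform (Ls k)"
    and BL: "border_limit f d r Ls"
    and PL: "\<And>k. k \<in> {1..r} \<Longrightarrow> proj_lim_is (Ls k) l"
    using assms(2) unfolding local_border_decomp_def by auto
  have one: "1 \<in> {1..r}" using assms(1) by simp
  obtain q c where lnz: "l \<noteq> (\<lambda>_. 0)" and cnz: "c \<noteq> 0"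
    and low: "\<And>i m. m < q \<Longrightarrow> fls_nth (Ls 1 i) m = 0"
    and lead: "\<And>i. fls_nth (Ls 1 i) q = c * l i"
    using PL[OF one] unfolding proj_lim_is_def by blast
  obtain j where lj: "l j \<noteq> 0" using lnz by auto
  define B where "B = Ls 1 j"
  have Bq: "fls_nth B q \<noteq> 0" using lead[of j] cnz lj unfolding B_def by simp
  then have Bnz: "B \<noteq> 0" by auto
  have Bsub: "fls_subdegree B = q"
    using Bq low unfolding B_def by (intro fls_subdegree_eqI) auto
  define D where "D i = Ls 1 i - fls_X_intpow q * fls_const (c * l i)" for i
  have ordD: "ordge (q+1) (D i)" for i
    unfolding ordge_def D_def
  proof (intro allI impI)
    fix m assume "m < q + 1"
    then show "fls_nth (Ls 1 i - fls_X_intpow q * fls_const (c * l i)) m = 0"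
      using low[of m i] lead[of i] by (cases "m = q") (auto simp: fls_X_intpow_times_conv_shift)
  qed
  define Ls' where "Ls' k i = Ls k i - (Ls k j / B) * D i" for k i
  have std: "standard_first Ls' l"
    unfolding standard_first_def
  proof (intro exI[of _ q] exI[of _ c])
    show "Ls' 1 = (\<lambda>i. fls_X_intpow q * fls_const (c * l i))"
      using Bnz unfolding Ls'_def D_def B_def by auto
  qed
  have rat: "rat_linform (Ls' k)" if k: "k \<in> {1..r}" for k
    unfolding rat_linform_def Ls'_def D_def B_def
    using LF[OF k] LF[OF one] unfolding rat_linform_def
    by (intro allI rat_diff rat_mult rat_div rat_Xpow rat_const) auto
  have pl: "proj_lim_is (Ls' k) l" if k: "k \<in> {1..r}" for k
  proof -
    obtain qk ck where "ck \<noteq> 0" and lowk: "\<And>i m. m < qk \<Longrightarrow> fls_nth (Ls k i) m = 0"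
      and leadk: "\<And>i. fls_nth (Ls k i) qk = ck * l i"
      using PL[OF k] unfolding proj_lim_is_def by blast
    have "ordge qk (Ls k j)" unfolding ordge_def using lowk by auto
    then have "ordge (qk - q) (Ls k j / B)"
      using Bnz Bsub by (intro ordge_div[of _ B "Ls k j"]) auto
    then have R: "ordge (qk + 1) ((Ls k j / B) * D i)" for i
      using ordge_mult[OF _ ordD[of i], of "qk - q" "Ls k j / B"] by simp
    have eq: "fls_nth (Ls' k i) m = fls_nth (Ls k i) m" if "m \<le> qk" for i m
      using R[of i] that unfolding Ls'_def ordge_def by auto
    show ?thesis unfolding proj_lim_is_def
      using lnz \<open>ck \<noteq> 0\<close> lowk leadk eq by (intro conjI exI[of _ qk] exI[of _ ck]) auto
  qed
  have bl: "border_limit f d r Ls'"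
    unfolding border_limit_def
  proof (intro allI)
    fix v :: "'n \<Rightarrow> complex"
    define x where "x k = lf_eval (Ls k) v" for k
    define y where "y k = Ls k j" for k
    define Dv where "Dv = (\<Sum>i\<in>UNIV. D i * fls_const (v i))"
    define t where "t = Dv / B"
    define Q where "Q m = (\<Sum>k\<in>{1..r}. of_nat (d choose m) * y k ^ m * x k ^ (d - m))" for m
    have ev': "lf_eval (Ls' k) v = x k + (-t) * y k" for k
    proof -
      have "lf_eval (Ls' k) v = x k - (Ls k j / B) * Dv"
        unfolding lf_eval_def Ls'_def x_def Dv_def
        by (simp add: algebra_simps sum_subtractf sum_distrib_left)
      then show ?thesis unfolding t_def y_def by simp
    qed
    have ordt: "ordge 1 t"
    proof -
      have "ordge (q+1) Dv" unfolding Dv_def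
        by (intro ordge_sum ordge_const_mult ordD)
      then show ?thesis using ordge_div[of t B Dv q "q+1"] Bnz Bsub unfolding t_def by simp
    qed
    have ev_shift: "lf_eval (Ls k) (\<lambda>i. v i + (if i = j then \<sigma> else 0)) = x k + fls_const \<sigma> * y k"
      for k \<sigma>
    proof -
      have "lf_eval (Ls k) (\<lambda>i. v i + (if i = j then \<sigma> else 0)) =
        (\<Sum>i\<in>UNIV. Ls k i * fls_const (v i)) + (\<Sum>i\<in>UNIV. (if i = j then Ls k i * fls_const \<sigma> else 0))"
      proof -
        have "\<And>i. Ls k i * fls_const (if i = j then \<sigma> else 0) = (if i = j then Ls k i * fls_const \<sigma> else 0)"
          by simp
        then show ?thesis unfolding lf_eval_def
          by (simp add: distrib_left sum.distrib flip: fls_plus_const del: sum.delta)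
      qed
      then show ?thesis unfolding x_def y_def lf_eval_def by (simp add: mult.commute)
    qed
    have Qnn: "fls_nth (Q m) e = 0" if "e < 0" "m \<le> d" for e m
    proof (rule poly_vanish[where d=d and a="\<lambda>m. fls_nth (Q m) e", OF _ that(2)])
      fix \<sigma> :: complex
      have "fls_nth (\<Sum>k\<in>{1..r}. (lf_eval (Ls k) (\<lambda>i. v i + (if i = j then \<sigma> else 0))) ^ d) e = 0"
        using BL that(1) unfolding border_limit_def by blast
      then have "fls_nth (\<Sum>m\<le>d. fls_const \<sigma> ^ m * Q m) e = 0"
        unfolding ev_shift binom_sum Q_def .
      then show "(\<Sum>m\<le>d. \<sigma> ^ m * fls_nth (Q m) e) = 0"
        by (simp add: fls_nth_sum flip: fls_const_power)
    qed
    have S': "(\<Sum>k\<in>{1..r}. (lf_eval (Ls' k) v) ^ d) = (\<Sum>m\<le>d. (-t)^m * Q m)"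
      unfolding ev' binom_sum Q_def ..
    have Q0: "Q 0 = (\<Sum>k\<in>{1..r}. (lf_eval (Ls k) v) ^ d)"
      unfolding Q_def x_def by simp
    have red: "fls_nth (\<Sum>k\<in>{1..r}. (lf_eval (Ls' k) v) ^ d) e = fls_nth (Q 0) e" if "e \<le> 0" for e
    proof -
      have "fls_nth ((-t)^m * Q m) e = (if m = 0 then fls_nth (Q 0) e else 0)" if "m \<le> d" for m
      proof (cases "m = 0")
        case False
        have "ordge 0 (Q m)" unfolding ordge_def using Qnn \<open>m \<le> d\<close> by auto
        moreover have "ordge 0 ((-t)^(m-1))" using ordge_pow0 ordge_mono[OF _ ordge_neg[OF ordt]] by simp
        ultimately have "ordge (1 + 0 + 0) ((-t) * (-t)^(m-1) * Q m)"
          by (intro ordge_mult ordge_neg ordt)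
        moreover have "(-t) * (-t)^(m-1) = (-t)^m" using False by (simp flip: power_Suc)
        ultimately have "ordge 1 ((-t)^m * Q m)" by (metis add_0_right)
        then show ?thesis using False \<open>e \<le> 0\<close> unfolding ordge_def by auto
      qed simp
      then show ?thesis unfolding S' by (simp add: fls_nth_sum)
    qed
    show "(\<forall>m<0. fls_nth (\<Sum>k\<in>{1..r}. lf_eval (Ls' k) v ^ d) m = 0) \<and>
          fls_nth (\<Sum>k\<in>{1..r}. lf_eval (Ls' k) v ^ d) 0 = f v"
      using red BL unfolding Q0 border_limit_def by auto
  qed
  show ?thesis using rat pl bl std unfolding local_border_decomp_def by blast
qed

end
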